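(* If $(G,\phi,\tau)$ is an optimal solution to the problem (RE) of maximizing $\phi_t+\phi_d(1-G(\tau))$ over all $(G,\phi,\tau)$ with $G$ a distribution on $[\underline{\theta},\overline{\theta}]$, $\phi=(\phi_t,\phi_d)\in\mathbb{R}^2$, $\tau\in\mathbb{R}$, subject to (w-P), (w-HE) and $E_G[s]=\mu$, then $G(s)=G(\mu+\phi_d)$ for all $s\in[\mu+\phi_d,\overline{\theta})$.
   Context: $F$ is a distribution with lowest and highest support points $0\le\underline{\theta}<\overline{\theta}<\infty$ and mean $\mu$. For a CDF $G$ on $[\underline{\theta},\overline{\theta}]$ and fees $(\phi_t,\phi_d)$: (w-P) means $\phi_t\le\int_{\mu+\phi_d}^{\overline{\theta}}[s-(\mu+\phi_d)]dG(s)$; (w-HE) for a threshold $\tau$ means $\tau-\phi_d=E_G[s\mid s\le\tau]$ and $\tau'-\phi_d\ge E_G[s\mid s\le\tau']$ for all $\tau'>\tau$. *)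

theory Defs
  imports "HOL-Probability.Probability"
begin

definition dist_on :: "real measure \<Rightarrow> real \<Rightarrow> real \<Rightarrow> bool" where
  "dist_on G lo hi \<longleftrightarrow> prob_space G \<and> sets G = sets borel \<and> measure G {lo..hi} = 1"

definition cdf :: "real measure \<Rightarrow> real \<Rightarrow> real" where
  "cdf G s = measure G {..s}"

definition cond_exp_below :: "real measure \<Rightarrow> real \<Rightarrow> real" where
  "cond_exp_below G t = (LINT s:{..t}|G. s) / measure G {..t}"

definition wP :: "real measure \<Rightarrow> real \<Rightarrow> real \<Rightarrow> real \<Rightarrow> real \<Rightarrow> bool" where
  "wP G mu hi phit phid \<longleftrightarrow>
     phit \<le> (LINT s:{mu + phid..hi}|G. (s - (mu + phid)))"

text \<open>(w-HE); the conditional expectation at tau is required to be well defined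
  (G(tau) > 0), which then also makes it well defined at every tau' > tau.\<close>
definition wHE :: "real measure \<Rightarrow> real \<Rightarrow> real \<Rightarrow> bool" where
  "wHE G phid tau \<longleftrightarrow>
     cdf G tau > 0 \<and>
     tau - phid = cond_exp_below G tau \<and>
     (\<forall>tau'. tau' > tau \<longrightarrow> tau' - phid \<ge> cond_exp_below G tau')"

definition feasible_RE :: "real \<Rightarrow> real \<Rightarrow> real \<Rightarrow> real measure \<Rightarrow> real \<Rightarrow> real \<Rightarrow> real \<Rightarrow> bool" where
  "feasible_RE lo hi mu G phit phid tau \<longleftrightarrow>
     dist_on G lo hi \<and> wP G mu hi phit phid \<and> wHE G phid tau \<and> (LINT s|G. s) = mu"

definition objective_RE :: "real measure \<Rightarrow> real \<Rightarrow> real \<Rightarrow> real \<Rightarrow> real" where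
  "objective_RE G phit phid tau = phit + phid * (1 - cdf G tau)"

end

theory Submission
  imports Defs
begin

lemma exp_gt_lin: fixes x :: real assumes "x > 0" shows "1 + x < exp x"
proof -
  have a: "1 + x/2 \<le> exp (x/2)" by (rule exp_ge_add_one_self)
  have "(1 + x/2)^2 \<le> exp (x/2) ^ 2" using a assms by (intro power_mono) auto
  also have "exp (x/2) ^ 2 = exp x" by (simp add: power2_eq_square flip: exp_add)
  finally have "(1 + x/2)^2 \<le> exp x" .
  moreover have "(1 + x/2)^2 = 1 + x + x*x/4" by (simp add: power2_eq_square field_simps)
  moreover have "x*x/4 > 0" using assms by simp
  ultimately show ?thesis by linarith
qed

lemma sinh_ineq:
  fixes u :: real assumes "u > 0" shows "2*u < exp u - exp (-u)"
proof -
  have "(\<lambda>x. exp x - exp (-x) - 2*x) 0 < (\<lambda>x. exp x - exp (-x) - 2*x) u"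
  proof (rule DERIV_pos_imp_increasing_open[OF assms])
    fix x :: real assume x: "0 < x" "x < u"
    have d: "DERIV (\<lambda>x. exp x - exp (-x) - 2*x) x :> exp x + exp (-x) - 2"
      by (auto intro!: derivative_eq_intros)
    have "1 + x < exp x" using x by (simp add: exp_gt_lin) 
    moreover have "1 + (-x) \<le> exp (-x)" by (rule exp_ge_add_one_self)
    ultimately have "exp x + exp (-x) - 2 > 0" by linarith
    with d show "\<exists>y. DERIV (\<lambda>x. exp x - exp (-x) - 2*x) x :> y \<and> 0 < y" by blast
  next
    show "continuous_on {0..u} (\<lambda>x. exp x - exp (-x) - 2*x)"
      by (intro continuous_intros)
  qed
  then show ?thesis by simp
qed

lemma sq_ineq: fixes t :: real assumes "t > 0" shows "t^2 * exp t < (exp t - 1)^2"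
proof -
  have "2*(t/2) < exp (t/2) - exp (-(t/2))" using assms by (intro sinh_ineq) auto
  then have "t * exp (t/2) < (exp (t/2) - exp (-(t/2))) * exp (t/2)" by simp
  also have "\<dots> = exp t - 1" by (simp add: algebra_simps flip: exp_add)
  finally have h: "t * exp (t/2) < exp t - 1" .
  have "t^2 * exp t = (t * exp (t/2))^2" by (simp add: power2_eq_square flip: exp_add)
  also have "\<dots> < (exp t - 1)^2" using h assms by (intro power_strict_mono) auto
  finally show ?thesis .
qed

lemma phi_mono:
  fixes t1 t2 :: real assumes "0 < t1" "t1 < t2"
  shows "1/(exp t1 - 1) - 1/t1 < 1/(exp t2 - 1) - 1/t2"
proof -
  have "(\<lambda>t. inverse (exp t - 1) - inverse t) t1 < (\<lambda>t. inverse (exp t - 1) - inverse t) t2"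
  proof (rule DERIV_pos_imp_increasing_open[OF assms(2)])
    fix x :: real assume x: "t1 < x" "x < t2"
    then have xp: "x > 0" using assms by auto
    have ne: "exp x - 1 \<noteq> 0" using xp by simp
    have d: "DERIV (\<lambda>t. inverse (exp t - 1) - inverse t) x :>
       (- (inverse (exp x - 1) * exp x * inverse (exp x - 1)) - - (inverse x * inverse x))"
      apply (rule derivative_intros DERIV_inverse)+
      using ne xp by (auto intro!: derivative_eq_intros)
    have h2: "exp x * x^2 < (exp x - 1)^2" using sq_ineq[OF xp] by (metis mult.commute)
    have p1: "(exp x - 1)^2 > 0" "x^2 > 0" using ne xp by auto
    have "exp x / (exp x - 1)^2 < 1/x^2"
      using h2 p1 by (simp add: divide_less_eq less_divide_eq)
    then have "(- (inverse (exp x - 1) * exp x * inverse (exp x - 1)) - - (inverse x * inverse x)) > 0"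
      by (simp add: power2_eq_square divide_inverse mult.commute mult.left_commute)
    with d show "\<exists>y. DERIV (\<lambda>t. inverse (exp t - 1) - inverse t) x :> y \<and> 0 < y" by blast
  next
    show "continuous_on {t1..t2} (\<lambda>t. inverse (exp t - 1) - inverse t)"
      using assms by (intro continuous_intros) auto
  qed
  then show ?thesis by (simp add: divide_inverse)
qed

lemma key_ineq:
  fixes k M d w P V0 :: real
  assumes k: "k > 0" and w: "0 < w" "w \<le> M" and d: "0 \<le> d" "d < k" and P: "P \<ge> 0"
    and gr: "d > 0 \<Longrightarrow> V0 + P \<le> P * exp (w/d)"
    and cv: "(k-d) * V0 \<le> w * (k - V0 - P)"
  shows "V0 < k * (1 - exp (-M/k))"
proof -
  define F where "F = exp (w/k)"
  have F1: "F > 1" unfolding F_def using w k by simp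
  have "exp (-M/k) \<le> exp (-w/k)" using w k by (simp add: divide_right_mono)
  also have "exp (-w/k) = 1/F" unfolding F_def by (simp add: exp_minus divide_inverse)
  finally have R: "k * (1 - 1/F) \<le> k * (1 - exp (-M/k))" using k by simp
  have main: "V0 * F < k * (F - 1)"
  proof (cases "V0 \<le> 0")
    case True
    then have "V0 * F \<le> 0" using F1 by (simp add: mult_nonpos_nonneg)
    also have "0 < k * (F - 1)" using k F1 by simp
    finally show ?thesis .
  next
    case False
    then have V0: "V0 > 0" by simp
    show ?thesis
    proof (cases "d = 0")
      case True
      have Fgt: "1 + w/k < F" unfolding F_def using exp_gt_lin[of "w/k"] w k by simp
      then have A: "w < (F - 1) * k" using k by (simp add: field_simps)
      have "k * V0 \<le> w * (k - V0 - P)" using cv True by simp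
      also have "\<dots> \<le> w * (k - V0)" using w P by (simp add: mult_left_mono)
      finally have B: "V0 * (k + w) \<le> w * k" by (simp add: algebra_simps)
      have "V0 * F * (k + w) = (V0 * (k + w)) * F" by simp
      also have "\<dots> \<le> (w * k) * F" using B F1 by (intro mult_right_mono) auto
      also have "\<dots> < k * (F - 1) * (k + w)"
      proof -
        have "k * (F - 1) * (k + w) - (w * k) * F = k * ((F-1)*k - w)" by (simp add: algebra_simps)
        also have "\<dots> > 0" using A k by simp
        finally show ?thesis by simp
      qed
      finally show ?thesis using k w by (simp add: mult_less_cancel_right)
    next
      case False
      then have dp: "d > 0" using d by simp
      define E where "E = exp (w/d)"
      have wl: "w/k < w/d" using w dp d by (simp add: frac_less2)
      have EF: "F < E" unfolding E_def F_def using wl by simp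
      have E1: "E > 1" using EF F1 by simp
      have ph: "1/(F - 1) - 1/(w/k) < 1/(E - 1) - 1/(w/d)"
        unfolding E_def F_def using phi_mono[OF _ wl] w k by simp
      then have "1/(F - 1) - k/w < 1/(E - 1) - d/w" by simp
      then have "w * (1/(F - 1) - k/w) < w * (1/(E - 1) - d/w)" using w by simp
      then have "w/(F-1) - k < w/(E-1) - d" using w by (simp add: right_diff_distrib)
      then have "w/(F-1) - w/(E-1) < k - d" by simp
      then have "(w/(F-1) - w/(E-1)) * ((F-1)*(E-1)) < (k - d) * ((F-1)*(E-1))"
        using E1 F1 by (intro mult_strict_right_mono) auto
      also have "(w/(F-1) - w/(E-1)) * ((F-1)*(E-1)) = w * (E - F)"
      proof -
        have n1: "F - 1 \<noteq> 0" "E - 1 \<noteq> 0" using E1 F1 by auto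
        have "w/(F-1) * ((F-1)*(E-1)) = w*(E-1)" using n1 by simp
        moreover have "w/(E-1) * ((F-1)*(E-1)) = w*(F-1)" using n1 by simp
        ultimately show ?thesis by (simp add: left_diff_distrib algebra_simps)
      qed
      finally have ph2: "w * (E - F) < (k - d) * ((F-1)*(E-1))" .
      have g1: "V0 \<le> P * (E - 1)" using gr[OF dp] unfolding E_def by (simp add: algebra_simps)
      have "V0 * w \<le> (P * w) * (E - 1)" using g1 w by (simp add: mult_right_mono mult.commute mult.left_commute)
      also have "\<dots> \<le> (w * k - w * V0 - (k - d) * V0) * (E - 1)"
        using cv E1 by (intro mult_right_mono) (auto simp: algebra_simps)
      finally have H: "V0 * (w + (E - 1) * (w + k - d)) \<le> (E - 1) * w * k" by (simp add: algebra_simps)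
      define D where "D = w + (E - 1) * (w + k - d)"
      have Dp: "D > 0" unfolding D_def using w E1 d by (intro add_pos_nonneg) auto
      have "V0 * F * D = (V0 * D) * F" by simp
      also have "\<dots> \<le> ((E - 1) * w * k) * F" using H F1 unfolding D_def by (intro mult_right_mono) auto
      also have "\<dots> < k * (F - 1) * D"
      proof -
        have "k * (F - 1) * D - ((E - 1) * w * k) * F = k * ((k - d) * ((F-1)*(E-1)) - w * (E - F))"
          unfolding D_def by (simp add: algebra_simps)
        also have "\<dots> > 0" using ph2 k by simp
        finally show ?thesis by simp
      qed
      finally show ?thesis using Dp by (simp add: mult_less_cancel_right)
    qed
  qed
  have "V0 < k * (1 - 1/F)"
  proof -
    have "V0 < k * (F - 1) / F" using main F1 by (simp add: less_divide_eq)
    also have "k * (F - 1) / F = k * (1 - 1/F)" using F1 by (simp add: field_simps)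
    finally show ?thesis .
  qed
  with R show ?thesis by linarith
qed

locale dG = prob_space G for G :: "real measure" +
  fixes lo hi :: real
  assumes sb: "sets G = sets borel" and conc: "measure G {lo..hi} = 1"
begin

lemma space_G: "space G = UNIV" using sets_eq_imp_space_eq[OF sb] by simp

lemma meas: fixes f :: "real \<Rightarrow> real" shows "f \<in> borel_measurable borel \<Longrightarrow> f \<in> borel_measurable G"
  by (subst measurable_cong_sets[OF sb refl]) auto

lemma sets_G: "A \<in> sets borel \<Longrightarrow> A \<in> sets G" using sb by simp

lemma AE_supp: "AE s in G. lo \<le> s \<and> s \<le> hi"
proof -
  have "AE s in G. s \<in> {lo..hi}" using AE_in_set_eq_1[of "{lo..hi}"] sets_G conc by simp
  then show ?thesis by simp
qed

lemma int_bdd: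
  fixes B :: real
  assumes "f \<in> borel_measurable borel" "\<And>s. lo \<le> s \<Longrightarrow> s \<le> hi \<Longrightarrow> \<bar>f s\<bar> \<le> B"
  shows "integrable G f"
proof (rule integrable_const_bound[of _ B])
  show "AE x in G. norm (f x) \<le> B" using AE_supp
  proof eventually_elim
    fix x assume "lo \<le> x \<and> x \<le> hi"
    then show "norm (f x) \<le> B" using assms(2)[of x] by simp
  qed
  show "f \<in> borel_measurable G" by (rule meas[OF assms(1)])
qed

lemma int_lin: "integrable G (\<lambda>s. indicator A s * (c1 * s + c2))" if "A \<in> sets borel" for A c1 c2
proof (rule int_bdd[where B = "\<bar>c1\<bar> * (\<bar>lo\<bar> + \<bar>hi\<bar>) + \<bar>c2\<bar>"])
  have m1: "indicator A \<in> borel_measurable borel" using that by (rule borel_measurable_indicator)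
  have m2: "(\<lambda>s::real. c1 * s + c2) \<in> borel_measurable borel" by (intro borel_measurable_continuous_onI continuous_intros)
  show "(\<lambda>s. indicator A s * (c1 * s + c2)) \<in> borel_measurable borel"
    using borel_measurable_times[OF m1 m2] by simp
  fix s assume s: "lo \<le> s" "s \<le> hi"
  have "\<bar>s\<bar> \<le> \<bar>lo\<bar> + \<bar>hi\<bar>" using s by linarith
  then have "\<bar>c1\<bar> * \<bar>s\<bar> \<le> \<bar>c1\<bar> * (\<bar>lo\<bar> + \<bar>hi\<bar>)" by (rule mult_left_mono) simp
  then have "\<bar>c1 * s\<bar> \<le> \<bar>c1\<bar> * (\<bar>lo\<bar> + \<bar>hi\<bar>)" by (simp only: abs_mult)
  then have h: "\<bar>c1 * s + c2\<bar> \<le> \<bar>c1\<bar> * (\<bar>lo\<bar> + \<bar>hi\<bar>) + \<bar>c2\<bar>" by linarith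
  show "\<bar>indicator A s * (c1 * s + c2)\<bar> \<le> \<bar>c1\<bar> * (\<bar>lo\<bar> + \<bar>hi\<bar>) + \<bar>c2\<bar>"
  proof (cases "s \<in> A")
    case True then show ?thesis using h by simp
  next
    case False then have "\<bar>indicator A s * (c1 * s + c2)\<bar> = 0" by simp
    also have "0 \<le> \<bar>c1\<bar> * (\<bar>lo\<bar> + \<bar>hi\<bar>) + \<bar>c2\<bar>" by simp
    finally show ?thesis .
  qed
qed

definition Gx :: "real \<Rightarrow> real" where "Gx x = measure G {..x}"
definition S :: "real \<Rightarrow> real" where "S x = (LINT s:{..x}|G. s)"
definition I :: "real \<Rightarrow> real" where "I x = x * Gx x - S x"

lemma Gx_int: "Gx x = (\<integral>s. indicator {..x} s * (0 * s + 1) \<partial>G)"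
  unfolding Gx_def using space_G by simp

lemma S_int: "S x = (\<integral>s. indicator {..x} s * (1 * s + 0) \<partial>G)"
  unfolding S_def set_lebesgue_integral_def by simp

lemma I_int: "I x = (\<integral>s. indicator {..x} s * ((-1) * s + x) \<partial>G)"
proof -
  have "(\<integral>s. indicator {..x} s * ((-1) * s + x) \<partial>G) =
        (\<integral>s. x * (indicator {..x} s * (0 * s + 1)) - indicator {..x} s * (1 * s + 0) \<partial>G)"
    by (intro Bochner_Integration.integral_cong) (auto simp: algebra_simps)
  also have "\<dots> = x * Gx x - S x"
    using int_lin[of "{..x}" 0 1] int_lin[of "{..x}" 1 0] unfolding Gx_int S_int by simp
  finally show ?thesis unfolding I_def by simp
qed

lemma Gx_mono: "x \<le> y \<Longrightarrow> Gx x \<le> Gx y"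
  unfolding Gx_def by (intro finite_measure_mono) (auto simp: sets_G)

lemma Gx_le1: "Gx x \<le> 1" unfolding Gx_def by simp
lemma Gx_ge0: "Gx x \<ge> 0" unfolding Gx_def by simp

lemma Gx_hi: "hi \<le> x \<Longrightarrow> Gx x = 1"
proof -
  assume "hi \<le> x"
  have "AE s in G. s \<in> {..x}" using AE_supp by eventually_elim (use \<open>hi \<le> x\<close> in auto)
  then show ?thesis unfolding Gx_def using AE_in_set_eq_1[of "{..x}"] sets_G by simp
qed

lemma S_hi: "hi \<le> x \<Longrightarrow> S x = (\<integral>s. s \<partial>G)"
proof -
  assume "hi \<le> x"
  have "S x = (\<integral>s. indicator {..x} s * (1 * s + 0) \<partial>G)" by (rule S_int)
  also have "\<dots> = (\<integral>s. s \<partial>G)"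
  proof (rule integral_cong_AE)
    show "(\<lambda>s. indicator {..x} s * (1 * s + 0)) \<in> borel_measurable G" by (intro meas) measurable
    show "(\<lambda>s. s) \<in> borel_measurable G" by (intro meas) measurable
    show "AE s in G. indicator {..x} s * (1 * s + 0) = s"
      using AE_supp by eventually_elim (use \<open>hi \<le> x\<close> in auto)
  qed
  finally show ?thesis .
qed

lemma S_lo: "S x \<ge> lo * Gx x"
proof -
  have "lo * Gx x = (\<integral>s. indicator {..x} s * (0 * s + lo) \<partial>G)"
    unfolding Gx_int using int_lin[of "{..x}" 0 1] by (simp add: mult.commute)
  also have "\<dots> \<le> (\<integral>s. indicator {..x} s * (1 * s + 0) \<partial>G)"
  proof (rule integral_mono_AE[OF int_lin int_lin])
    show "AE s in G. indicator {..x} s * (0 * s + lo) \<le> indicator {..x} s * (1 * s + 0)"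
      using AE_supp by eventually_elim (auto simp: indicator_def)
  qed simp_all
  finally show ?thesis using S_int by simp
qed

lemma I_nonneg: "I x \<ge> 0"
  unfolding I_int by (intro integral_nonneg_AE AE_I2) (simp add: indicator_def)

lemma I_diff:
  assumes "x \<le> y"
  shows "(y - x) * Gx x \<le> I y - I x" "I y - I x \<le> (y - x) * Gx y"
proof -
  have d: "I y - I x = (\<integral>s. indicator {..y} s * ((-1) * s + y) - indicator {..x} s * ((-1) * s + x) \<partial>G)"
    unfolding I_int using int_lin[of "{..y}" "-1" y] int_lin[of "{..x}" "-1" x] by simp
  have g1: "(y - x) * Gx x = (\<integral>s. indicator {..x} s * (0 * s + (y - x)) \<partial>G)"
    unfolding Gx_int using int_lin[of "{..x}" 0 1] by (simp add: mult.commute)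
  have g2: "(y - x) * Gx y = (\<integral>s. indicator {..y} s * (0 * s + (y - x)) \<partial>G)"
    unfolding Gx_int using int_lin[of "{..y}" 0 1] by (simp add: mult.commute)
  have ii: "integrable G (\<lambda>s. indicator {..y} s * ((-1) * s + y) - indicator {..x} s * ((-1) * s + x))"
    using int_lin[of "{..y}" "-1" y] int_lin[of "{..x}" "-1" x] by simp
  have p1: "indicator {..x} s * (0 * s + (y - x)) \<le> indicator {..y} s * ((-1) * s + y) - indicator {..x} s * ((-1) * s + x)" for s
  proof (cases "s \<le> x")
    case True then show ?thesis using assms by simp
  next
    case False then show ?thesis using assms by (cases "s \<le> y") simp_all
  qed
  have p2: "indicator {..y} s * ((-1) * s + y) - indicator {..x} s * ((-1) * s + x) \<le> indicator {..y} s * (0 * s + (y - x))" for s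
  proof (cases "s \<le> x")
    case True then show ?thesis using assms by simp
  next
    case False then show ?thesis using assms by (cases "s \<le> y") simp_all
  qed
  show "(y - x) * Gx x \<le> I y - I x" unfolding d g1
    by (rule integral_mono[OF int_lin ii p1]) simp
  show "I y - I x \<le> (y - x) * Gx y" unfolding d g2
    by (rule integral_mono[OF ii int_lin p2]) simp
qed

lemma I_mono: "x \<le> y \<Longrightarrow> I x \<le> I y"
  using I_diff(1)[of x y] Gx_ge0[of x] by (smt (verit) mult_nonneg_nonneg)

lemma int_lin_eq: "(\<integral>s. indicator {..x} s * (c1 * s + c2) \<partial>G) = c1 * S x + c2 * Gx x"
proof -
  have "(\<integral>s. indicator {..x} s * (c1 * s + c2) \<partial>G) =
    (\<integral>s. c1 * (indicator {..x} s * (1 * s + 0)) + c2 * (indicator {..x} s * (0 * s + 1)) \<partial>G)"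
    by (rule Bochner_Integration.integral_cong[OF refl]) (simp add: algebra_simps)
  also have "\<dots> = c1 * (\<integral>s. indicator {..x} s * (1 * s + 0) \<partial>G) + c2 * (\<integral>s. indicator {..x} s * (0 * s + 1) \<partial>G)"
    using int_lin[of "{..x}" 1 0] int_lin[of "{..x}" 0 1] by (simp del: mult_zero_left add_0 add_0_right mult_1 times_divide_eq_right)
  finally show ?thesis unfolding S_int Gx_int .
qed

lemma wP_int:
  assumes "a \<le> hi"
  shows "(LINT s:{a..hi}|G. (s - a)) = (\<integral>s. s \<partial>G) - a + I a"
proof -
  have pw: "indicator {a..hi} s *\<^sub>R (s - a) = indicator {..hi} s * (1 * s + (-a)) - indicator {..a} s * (1 * s + (-a))" for s :: real
  proof (cases "s \<le> a")
    case True then show ?thesis using assms by (cases "s = a") simp_all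
  next
    case False then show ?thesis using assms by (cases "s \<le> hi") simp_all
  qed
  have "(LINT s:{a..hi}|G. (s - a)) =
     (\<integral>s. indicator {..hi} s * (1 * s + (-a)) - indicator {..a} s * (1 * s + (-a)) \<partial>G)"
    unfolding set_lebesgue_integral_def pw by simp
  also have "\<dots> = (\<integral>s. indicator {..hi} s * (1 * s + (-a)) \<partial>G) - (\<integral>s. indicator {..a} s * (1 * s + (-a)) \<partial>G)"
    by (rule Bochner_Integration.integral_diff[OF int_lin int_lin]) simp_all
  also have "\<dots> = (1 * S hi + (-a) * Gx hi) - (1 * S a + (-a) * Gx a)"
    by (simp only: int_lin_eq)
  finally show ?thesis using Gx_hi[of hi] S_hi[of hi] unfolding I_def by simp
qed

end

context dG begin

lemma gron_step:
  assumes d: "d > 0" and x: "tau \<le> x" and h: "h > 0"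
    and hyp: "\<And>y. y > tau \<Longrightarrow> I y \<ge> d * Gx y"
  shows "I (x + h) * (1 - h/d) \<le> I x"
proof -
  have "I (x + h) - I x \<le> h * Gx (x + h)" using I_diff(2)[of x "x + h"] h by simp
  also have "h * Gx (x + h) \<le> h * (I (x + h) / d)"
  proof -
    have "d * Gx (x + h) \<le> I (x + h)" using hyp[of "x + h"] x h by simp
    then have "Gx (x + h) \<le> I (x + h) / d" using d by (simp add: le_divide_eq mult.commute)
    then show ?thesis using h by (intro mult_left_mono) auto
  qed
  finally have "I (x + h) - I x \<le> h * (I (x + h) / d)" .
  then show ?thesis by (simp add: algebra_simps)
qed

lemma gron_iter:
  assumes d: "d > 0" and h: "h > 0" "h \<le> d"
    and hyp: "\<And>y. y > tau \<Longrightarrow> I y \<ge> d * Gx y"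
  shows "I (tau + real j * h) * (1 - h/d) ^ j \<le> I tau"
proof (induction j)
  case 0 then show ?case by simp
next
  case (Suc j)
  have q: "(1 - h/d) \<ge> 0" using h d by simp
  have st: "I (tau + real j * h + h) * (1 - h/d) \<le> I (tau + real j * h)"
    using gron_step[where tau=tau and d=d and x="tau + real j * h" and h=h] d h hyp by simp
  have "I (tau + real (Suc j) * h) * (1 - h/d) ^ Suc j = (I (tau + real j * h + h) * (1 - h/d)) * (1 - h/d) ^ j"
    by (simp add: algebra_simps)
  also have "\<dots> \<le> I (tau + real j * h) * (1 - h/d) ^ j"
    using st q by (intro mult_right_mono) auto
  also have "\<dots> \<le> I tau" by (rule Suc.IH)
  finally show ?case .
qed

lemma gronwall:
  assumes d: "d > 0" and ta: "tau \<le> a"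
    and hyp: "\<And>y. y > tau \<Longrightarrow> I y \<ge> d * Gx y"
  shows "I a * exp (- ((a - tau)/d)) \<le> I tau"
proof (cases "a = tau")
  case True then show ?thesis by simp
next
  case False
  then have w: "a - tau > 0" using ta by simp
  define t where "t = (a - tau)/d"
  have tp: "t > 0" unfolding t_def using w d by simp
  have lim: "(\<lambda>n. I a * (1 + (-t) / real n) ^ n) \<longlonglongrightarrow> I a * exp (-t)"
    by (intro tendsto_mult tendsto_const tendsto_exp_limit_sequentially)
  obtain N :: nat where N: "t < real N" using reals_Archimedean2 by blast
  have "\<forall>n\<ge>N. I a * (1 + (-t) / real n) ^ n \<le> I tau"
  proof (intro allI impI)
    fix n assume n: "N \<le> n"
    then have nt: "real n > t" using N by linarith
    then have np: "real n > 0" using tp by linarith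
    define h where "h = (a - tau) / real n"
    have hp: "h > 0" unfolding h_def using w np by simp
    have hd: "h \<le> d"
    proof -
      have "(a - tau) / d < real n" using nt unfolding t_def .
      then have "a - tau < real n * d" using d by (simp add: divide_less_eq)
      then show ?thesis unfolding h_def using np by (simp add: divide_le_eq mult.commute)
    qed
    have e1: "tau + real n * h = a" unfolding h_def using np by simp
    have e2: "1 - h/d = 1 + (-t) / real n" unfolding h_def t_def using np d by (simp add: field_simps)
    show "I a * (1 + (-t) / real n) ^ n \<le> I tau"
      using gron_iter[where tau=tau and d=d and h=h and j=n] d hp hd hyp unfolding e1 e2 by blast
  qed
  then have "I a * exp (-t) \<le> I tau" using LIMSEQ_le_const2[OF lim] by blast
  then show ?thesis unfolding t_def .
qed

end

lemma upper_bound: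
  assumes feas: "feasible_RE lo hi mu G phit d tau" and ahi: "mu + d < hi" and lomu: "lo < mu"
  shows "objective_RE G phit d tau < (hi - mu) * (1 - exp (- (mu - lo)/(hi - mu)))"
proof -
  have dist: "dist_on G lo hi" and wp: "wP G mu hi phit d" and he: "wHE G d tau"
    and mean: "(LINT s|G. s) = mu"
    using feas unfolding feasible_RE_def by auto
  have ps: "prob_space G" and sbG: "sets G = sets borel" and cc: "measure G {lo..hi} = 1"
    using dist unfolding dist_on_def by blast+
  interpret dG G lo hi by (rule dG.intro[OF ps dG_axioms.intro[OF sbG cc]])
  define a where "a = mu + d"
  define L where "L = Gx tau"
  have cdf_eq: "cdf G x = Gx x" for x unfolding cdf_def Gx_def by simp
  have ce: "cond_exp_below G x = S x / Gx x" for x unfolding cond_exp_below_def S_def Gx_def by simp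
  have Lp: "L > 0" using he unfolding wHE_def L_def cdf_eq by simp
  have teq: "tau - d = S tau / L" using he unfolding wHE_def L_def ce by simp
  then have Stau: "S tau = (tau - d) * L" using Lp by (simp add: field_simps)
  have Itau: "I tau = d * L" unfolding I_def L_def[symmetric] Stau by (simp add: algebra_simps)
  have hyp: "I y \<ge> d * Gx y" if "y > tau" for y
  proof -
    have "y - d \<ge> S y / Gx y" using he that unfolding wHE_def ce by simp
    moreover have "Gx y \<ge> L" unfolding L_def using Gx_mono that by simp
    ultimately have "S y \<le> (y - d) * Gx y" using Lp by (simp add: divide_le_eq)
    then show ?thesis unfolding I_def by (simp add: algebra_simps)
  qed
  have d0: "d \<ge> 0"
  proof -
    have "0 \<le> d * L" using I_nonneg[of tau] Itau by simp
    then show ?thesis using Lp by (simp add: zero_le_mult_iff)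
  qed
  have tlo: "tau - d \<ge> lo"
  proof -
    have "lo * L \<le> (tau - d) * L" using S_lo[of tau] Stau unfolding L_def by simp
    then show ?thesis using Lp by simp
  qed
  have k: "hi - mu > 0" using ahi d0 by simp
  have Ihi: "I hi = hi - mu" unfolding I_def using Gx_hi[of hi] S_hi[of hi] mean by simp
  have V: "objective_RE G phit d tau \<le> I a - d * L"
  proof -
    have "phit \<le> (LINT s:{mu + d..hi}|G. (s - (mu + d)))" using wp unfolding wP_def by simp
    also have "\<dots> = mu - a + I a" using wP_int[of a] ahi mean unfolding a_def by simp
    finally have "phit \<le> mu - a + I a" .
    then show ?thesis unfolding objective_RE_def cdf_eq L_def[symmetric] a_def by (simp add: algebra_simps)
  qed
  have Vpos: "0 < (hi - mu) * (1 - exp (- (mu - lo)/(hi - mu)))"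
    using k lomu by (intro mult_pos_pos) (auto simp: divide_less_0_iff)
  show ?thesis
  proof (cases "a \<le> tau")
    case True
    then have "I a \<le> I tau" by (rule I_mono)
    then have "I a - d * L \<le> 0" using Itau by simp
    then show ?thesis using V Vpos by linarith
  next
    case False
    define w where "w = a - tau"
    have wp0: "w > 0" using False unfolding w_def by simp
    have wM: "w \<le> mu - lo" using tlo unfolding w_def a_def by simp
    have P: "d * L \<ge> 0" using d0 Lp by simp
    have gr: "I a - d * L + d * L \<le> d * L * exp (w/d)" if dp: "d > 0"
    proof -
      have "I a * exp (- ((a - tau)/d)) \<le> I tau"
        using gronwall[OF dp, of tau a] False hyp by simp
      then have "I a * exp (- (w/d)) * exp (w/d) \<le> d * L * exp (w/d)"
        using Itau unfolding w_def by (intro mult_right_mono) auto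
      moreover have "I a * exp (- (w/d)) * exp (w/d) = I a"
        by (simp add: mult.assoc flip: exp_add)
      ultimately show ?thesis by simp
    qed
    have cv: "((hi - mu) - d) * (I a - d * L) \<le> w * ((hi - mu) - (I a - d * L) - d * L)"
    proof -
      have c1: "I a - I tau \<le> w * Gx a" using I_diff(2)[of tau a] False unfolding w_def by simp
      have c2: "(hi - a) * Gx a \<le> I hi - I a" using I_diff(1)[of a hi] ahi unfolding a_def by simp
      have ha: "hi - a > 0" using ahi unfolding a_def by simp
      have "((hi - mu) - d) * (I a - d * L) = (hi - a) * (I a - I tau)" unfolding a_def Itau by simp
      also have "\<dots> \<le> (hi - a) * (w * Gx a)" using c1 ha by (intro mult_left_mono) auto
      also have "\<dots> = w * ((hi - a) * Gx a)" by simp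
      also have "\<dots> \<le> w * (I hi - I a)" using c2 wp0 by (intro mult_left_mono) auto
      also have "\<dots> = w * ((hi - mu) - (I a - d * L) - d * L)" using Ihi by simp
      finally show ?thesis .
    qed
    have "I a - d * L < (hi - mu) * (1 - exp (- (mu - lo)/(hi - mu)))"
      using key_ineq[of "hi - mu" w "mu - lo" d "d * L" "I a - d * L"] k wp0 wM d0 ahi P gr cv
      unfolding a_def by (simp add: minus_divide_left)
    then show ?thesis using V by linarith
  qed
qed

locale star =
  fixes lo mu hi :: real
  assumes lm: "lo < mu" and mh: "mu < hi"
begin

definition "k = hi - mu"
definition "ts = lo + k"
definition "L = exp (- (mu - lo) / k)"
definition "E x = exp ((x - ts) / k)"
definition "beta s = L * indicator {lo - 1..lo} s + indicator {ts..hi} s * (L / k * E s)"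
definition "Gs = distr (density lborel beta) borel (\<lambda>s. max lo s)"

lemma kp: "k > 0" unfolding k_def using mh by simp
lemma lots: "lo < ts" unfolding ts_def using kp by simp
lemma tshi: "ts < hi" unfolding ts_def k_def using lm by simp
lemma Lp: "L > 0" unfolding L_def by simp
lemma Ets: "E ts = 1" unfolding E_def by simp
lemma LEhi: "L * E hi = 1"
proof -
  have "L * E hi = exp (- (mu - lo) / k + (hi - ts) / k)" unfolding L_def E_def by (simp add: exp_add)
  also have "hi - ts = mu - lo" unfolding ts_def k_def by simp
  also have "- (mu - lo) / k + (mu - lo) / k = (- (mu - lo) + (mu - lo)) / k" by (rule add_divide_distrib[symmetric])
  also have "\<dots> = 0" by simp
  finally show ?thesis by simp
qed

lemma beta_meas: "beta \<in> borel_measurable borel"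
  unfolding beta_def E_def by measurable

lemma Epos: "E x > 0" unfolding E_def by simp

lemma beta_nn: "beta s \<ge> 0"
  unfolding beta_def using Lp kp Epos[of s] by (intro add_nonneg_nonneg) simp_all

lemma Ederiv: "DERIV E x :> E x / k"
  unfolding E_def using kp by (auto intro!: derivative_eq_intros)

lemma Econt: "isCont E x"
  using Ederiv DERIV_isCont by blast

lemma FTC0:
  assumes "ts \<le> b"
  shows "(\<integral>s. (L / k * E s) * indicator {ts..b} s \<partial>lborel) = L * E b - L"
proof -
  have "(\<integral>s. (L / k * E s) * indicator {ts..b} s \<partial>lborel) = L * E b - L * E ts"
  proof (rule integral_FTC_Icc_real[OF assms])
    fix x show "DERIV (\<lambda>s. L * E s) x :> L / k * E x"
      using DERIV_cmult[OF Ederiv, of L] by simp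
    show "isCont (\<lambda>s. L / k * E s) x" by (intro continuous_intros Econt)
  qed
  then show ?thesis using Ets by simp
qed

lemma FTC1:
  assumes "ts \<le> b"
  shows "(\<integral>s. (L / k * E s * s) * indicator {ts..b} s \<partial>lborel) = L * (b - k) * E b - L * lo"
proof -
  have "(\<integral>s. (L / k * E s * s) * indicator {ts..b} s \<partial>lborel) = L * (b - k) * E b - L * (ts - k) * E ts"
  proof (rule integral_FTC_Icc_real[OF assms])
    fix x
    have d1: "DERIV (\<lambda>s. L * (s - k)) x :> L" by (auto intro!: derivative_eq_intros)
    have D: "DERIV (\<lambda>s. L * (s - k) * E s) x :> L * E x + E x / k * (L * (x - k))"
      by (rule DERIV_mult[OF d1 Ederiv])
    have eq: "L * E x + E x / k * (L * (x - k)) = L / k * E x * x"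
      using kp by (simp add: field_simps)
    show "DERIV (\<lambda>s. L * (s - k) * E s) x :> L / k * E x * x" using D unfolding eq .
    show "isCont (\<lambda>s. L / k * E s * s) x" by (intro continuous_intros Econt)
  qed
  then show ?thesis using Ets unfolding ts_def by simp
qed

lemma int0: "integrable lborel (\<lambda>s. (L / k * E s) * indicator {ts..b} s)"
  by (rule borel_integrable_atLeastAtMost) (intro continuous_intros Econt)

lemma int1: "integrable lborel (\<lambda>s. (L / k * E s * s) * indicator {ts..b} s)"
  by (rule borel_integrable_atLeastAtMost) (intro continuous_intros Econt)

lemma int_Gs:
  fixes f :: "real \<Rightarrow> real"
  assumes fm: "f \<in> borel_measurable borel"
    and fi: "integrable lborel (\<lambda>s. (L / k * E s * f s) * indicator {ts..hi} s)"
  shows "integral\<^sup>L Gs f = L * f lo + (\<integral>s. (L / k * E s * f s) * indicator {ts..hi} s \<partial>lborel)"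
proof -
  have Tm: "(\<lambda>s::real. max lo s) \<in> borel_measurable borel" by measurable
  have "integral\<^sup>L Gs f = integral\<^sup>L (density lborel beta) (\<lambda>s. f (max lo s))"
    unfolding Gs_def
    by (rule integral_distr) (use Tm fm in \<open>simp_all add: measurable_distr_eq1\<close>)
  also have "\<dots> = (\<integral>s. beta s * f (max lo s) \<partial>lborel)"
    by (subst integral_density) (use beta_meas beta_nn fm Tm in \<open>auto intro: measurable_compose\<close>)
  also have "\<dots> = (\<integral>s. (L * f lo) * indicator {lo - 1..lo} s + (L / k * E s * f s) * indicator {ts..hi} s \<partial>lborel)"
  proof (rule Bochner_Integration.integral_cong[OF refl])
    fix s :: real
    show "beta s * f (max lo s) = (L * f lo) * indicator {lo - 1..lo} s + (L / k * E s * f s) * indicator {ts..hi} s"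
    proof (cases "s \<le> lo")
      case True
      then have i2: "indicator {ts..hi} s = (0::real)" using lots by simp
      have m: "max lo s = lo" using True by simp
      show ?thesis unfolding beta_def i2 m by (simp add: algebra_simps)
    next
      case False
      then have i1: "indicator {lo - 1..lo} s = (0::real)" by simp
      have m: "max lo s = s" using False by simp
      show ?thesis unfolding beta_def i1 m by (simp add: algebra_simps)
    qed
  qed
  also have "\<dots> = (\<integral>s. (L * f lo) * indicator {lo - 1..lo} s \<partial>lborel) + (\<integral>s. (L / k * E s * f s) * indicator {ts..hi} s \<partial>lborel)"
    by (rule Bochner_Integration.integral_add[OF _ fi]) (rule borel_integrable_atLeastAtMost, simp)
  also have "(\<integral>s. (L * f lo) * indicator {lo - 1..lo} s \<partial>lborel) = L * f lo"
    by simp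
  finally show ?thesis .
qed

end

context star begin

lemma sets_Gs: "sets Gs = sets borel" unfolding Gs_def by simp
lemma space_Gs: "space Gs = UNIV" using sets_eq_imp_space_eq[OF sets_Gs] by simp

lemma beta_int: "integrable lborel beta" and beta_integral: "integral\<^sup>L lborel beta = 1"
proof -
  have pw: "beta = (\<lambda>s. (L * 1) * indicator {lo - 1..lo} s + (L / k * E s) * indicator {ts..hi} s)"
    unfolding beta_def by (auto simp: algebra_simps)
  have i1: "integrable lborel (\<lambda>s. (L * 1) * indicator {lo - 1..lo} s)"
    by (rule borel_integrable_atLeastAtMost) simp
  show "integrable lborel beta" unfolding pw by (intro Bochner_Integration.integrable_add i1 int0)
  have "integral\<^sup>L lborel beta = (\<integral>s. (L * 1) * indicator {lo - 1..lo} s \<partial>lborel) + (\<integral>s. (L / k * E s) * indicator {ts..hi} s \<partial>lborel)"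
    unfolding pw by (intro Bochner_Integration.integral_add i1 int0)
  also have "\<dots> = L + (L * E hi - L)" using FTC0[of hi] tshi by simp
  also have "\<dots> = 1" using LEhi by simp
  finally show "integral\<^sup>L lborel beta = 1" .
qed

lemma prob_Gs: "prob_space Gs"
proof (rule prob_spaceI)
  have Tm: "(\<lambda>s::real. max lo s) \<in> borel_measurable borel" by measurable
  have "emeasure Gs (space Gs) = emeasure (density lborel beta) UNIV"
    unfolding Gs_def using Tm by (simp add: emeasure_distr)
  also have "\<dots> = (\<integral>\<^sup>+ s. beta s \<partial>lborel)"
    using beta_meas by (simp add: emeasure_density)
  also have "\<dots> = ennreal (integral\<^sup>L lborel beta)"
    by (rule nn_integral_eq_integral[OF beta_int]) (simp add: beta_nn)
  also have "\<dots> = 1" using beta_integral by simp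
  finally show "emeasure Gs (space Gs) = 1" .
qed

lemma int_Gs_below:
  fixes g :: "real \<Rightarrow> real"
  assumes x: "ts \<le> x" and gc: "\<And>s. isCont g s" and gm: "g \<in> borel_measurable borel"
  shows "integral\<^sup>L Gs (\<lambda>t. indicator {..x} t * g t) =
           L * g lo + (\<integral>s. (L / k * E s * g s) * indicator {ts..min x hi} s \<partial>lborel)"
proof -
  have pw: "(\<lambda>s. (L / k * E s * (indicator {..x} s * g s)) * indicator {ts..hi} s) =
            (\<lambda>s. (L / k * E s * g s) * indicator {ts..min x hi} s)"
    by (auto simp: indicator_def)
  have ii: "integrable lborel (\<lambda>s. (L / k * E s * g s) * indicator {ts..min x hi} s)"
    by (rule borel_integrable_atLeastAtMost) (intro continuous_intros Econt gc)
  have fm: "(\<lambda>t. indicator {..x} t * g t) \<in> borel_measurable borel" using gm by measurable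
  have "integral\<^sup>L Gs (\<lambda>t. indicator {..x} t * g t) =
     L * (indicator {..x} lo * g lo) + (\<integral>s. (L / k * E s * (indicator {..x} s * g s)) * indicator {ts..hi} s \<partial>lborel)"
    by (rule int_Gs[OF fm]) (unfold pw, rule ii)
  also have "indicator {..x} lo = (1::real)" using x lots by simp
  finally show ?thesis unfolding pw by simp
qed

lemma Gx_Gs: assumes "ts \<le> x" shows "measure Gs {..x} = L * E (min x hi)"
proof -
  have "measure Gs {..x} = integral\<^sup>L Gs (\<lambda>t. indicator {..x} t * 1)"
    using space_Gs by simp
  also have "\<dots> = L * 1 + (\<integral>s. (L / k * E s * 1) * indicator {ts..min x hi} s \<partial>lborel)"
    by (rule int_Gs_below[OF assms]) simp_all
  also have "\<dots> = L * E (min x hi)" using FTC0[of "min x hi"] assms tshi by simp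
  finally show ?thesis .
qed

lemma S_Gs: assumes "ts \<le> x" shows "(LINT t:{..x}|Gs. t) = L * (min x hi - k) * E (min x hi)"
proof -
  have "(LINT t:{..x}|Gs. t) = integral\<^sup>L Gs (\<lambda>t. indicator {..x} t * t)"
    unfolding set_lebesgue_integral_def by simp
  also have "\<dots> = L * lo + (\<integral>s. (L / k * E s * s) * indicator {ts..min x hi} s \<partial>lborel)"
    by (rule int_Gs_below[OF assms]) simp_all
  also have "\<dots> = L * (min x hi - k) * E (min x hi)" using FTC1[of "min x hi"] assms tshi by simp
  finally show ?thesis .
qed

lemma mean_Gs: "(LINT t|Gs. t) = mu"
proof -
  have "(LINT t|Gs. t) = L * lo + (\<integral>s. (L / k * E s * s) * indicator {ts..hi} s \<partial>lborel)"
    by (rule int_Gs[OF _ int1]) simp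
  also have "\<dots> = L * (hi - k) * E hi" using FTC1[of hi] tshi by simp
  also have "\<dots> = hi - k" using LEhi by (simp add: mult.commute mult.left_commute)
  finally show ?thesis unfolding k_def by simp
qed

lemma conc_Gs: "measure Gs {lo..hi} = 1"
proof -
  have pw: "(\<lambda>s. (L / k * E s * indicator {lo..hi} s) * indicator {ts..hi} s) =
            (\<lambda>s. (L / k * E s) * indicator {ts..hi} s)"
    using lots by (auto simp: indicator_def)
  have "measure Gs {lo..hi} = integral\<^sup>L Gs (indicator {lo..hi})"
    using space_Gs by simp
  also have "\<dots> = L * indicator {lo..hi} lo + (\<integral>s. (L / k * E s * indicator {lo..hi} s) * indicator {ts..hi} s \<partial>lborel)"
    apply (rule int_Gs)
     apply simp
    apply (unfold pw)
    by (rule int0)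
  also have "\<dots> = L + (L * E hi - L)" unfolding pw using FTC0[of hi] tshi lm mh by simp
  also have "\<dots> = 1" using LEhi by simp
  finally show ?thesis .
qed

lemma feas_Gs: "feasible_RE lo hi mu Gs 0 k ts"
  unfolding feasible_RE_def
proof (intro conjI)
  show "dist_on Gs lo hi" unfolding dist_on_def using prob_Gs sets_Gs conc_Gs by simp
  show "(LINT s|Gs. s) = mu" by (rule mean_Gs)
  have hik: "mu + k = hi" unfolding k_def by simp
  have "(LINT s:{mu + k..hi}|Gs. (s - (mu + k))) = 0"
    unfolding hik set_lebesgue_integral_def
    by (rule trans[OF Bochner_Integration.integral_cong[OF refl] integral_zero]) (simp add: indicator_def)
  then show "wP Gs mu hi 0 k" unfolding wP_def by simp
  have cdf: "cdf Gs x = L * E (min x hi)" if "ts \<le> x" for x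
    unfolding cdf_def using Gx_Gs[OF that] .
  have ce: "cond_exp_below Gs x = min x hi - k" if "ts \<le> x" for x
  proof -
    have "cond_exp_below Gs x = L * (min x hi - k) * E (min x hi) / (L * E (min x hi))"
      unfolding cond_exp_below_def using S_Gs[OF that] Gx_Gs[OF that] by simp
    also have "\<dots> = min x hi - k" using Lp Epos[of "min x hi"] by simp
    finally show ?thesis .
  qed
  show "wHE Gs k ts" unfolding wHE_def
  proof (intro conjI allI impI)
    show "cdf Gs ts > 0" using cdf[of ts] Lp Ets tshi by simp
    show "ts - k = cond_exp_below Gs ts" using ce[of ts] tshi by simp
    fix t' assume "t' > ts"
    then show "t' - k \<ge> cond_exp_below Gs t'" using ce[of t'] by simp
  qed
qed

lemma obj_Gs: "objective_RE Gs 0 k ts = (hi - mu) * (1 - exp (- (mu - lo)/(hi - mu)))"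
proof -
  have "cdf Gs ts = L" unfolding cdf_def using Gx_Gs[of ts] Ets tshi by simp
  then show ?thesis unfolding objective_RE_def L_def k_def by simp
qed

end

context dG begin

lemma mean_lo:
  assumes m: "(\<integral>s. s \<partial>G) \<le> lo" and x: "lo \<le> x"
  shows "Gx x = 1"
proof -
  have i1: "integrable G (\<lambda>s. s)"
    using int_lin[of UNIV 1 0] by simp
  have i2: "integrable G (\<lambda>s. s - lo)" using i1 by simp
  have nn: "AE s in G. 0 \<le> s - lo" using AE_supp by eventually_elim simp
  have "(\<integral>s. s - lo \<partial>G) = (\<integral>s. s \<partial>G) - lo" using i1 prob_space by simp
  then have le: "(\<integral>s. s - lo \<partial>G) \<le> 0" using m by simp
  have ge: "(\<integral>s. s - lo \<partial>G) \<ge> 0" by (rule integral_nonneg_AE[OF nn])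
  have "(\<integral>s. s - lo \<partial>G) = 0" using le ge by simp
  then have "AE s in G. s - lo = 0" using integral_nonneg_eq_0_iff_AE[OF i2 nn] by simp
  then have "AE s in G. s \<in> {..x}" by eventually_elim (use x in simp)
  then show ?thesis unfolding Gx_def using AE_in_set_eq_1[of "{..x}"] sets_G by simp
qed

end

lemma feas_d:
  assumes feas: "feasible_RE lo hi mu G phit d tau"
  shows "d \<ge> 0"
proof -
  have dist: "dist_on G lo hi" and he: "wHE G d tau"
    using feas unfolding feasible_RE_def by auto
  have ps: "prob_space G" and sbG: "sets G = sets borel" and cc: "measure G {lo..hi} = 1"
    using dist unfolding dist_on_def by blast+
  interpret dG G lo hi by (rule dG.intro[OF ps dG_axioms.intro[OF sbG cc]])
  define L where "L = Gx tau"
  have cdf_eq: "cdf G x = Gx x" for x unfolding cdf_def Gx_def by simp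
  have ce: "cond_exp_below G x = S x / Gx x" for x unfolding cond_exp_below_def S_def Gx_def by simp
  have Lp: "L > 0" using he unfolding wHE_def L_def cdf_eq by simp
  have teq: "tau - d = S tau / L" using he unfolding wHE_def L_def ce by simp
  then have Stau: "S tau = (tau - d) * L" using Lp by (simp add: field_simps)
  have Itau: "I tau = d * L" unfolding I_def L_def[symmetric] Stau by (simp add: algebra_simps)
  have "0 \<le> d * L" using I_nonneg[of tau] Itau by simp
  then show ?thesis using Lp by (simp add: zero_le_mult_iff)
qed

theorem lemma8:
  fixes F G :: "real measure" and lo hi mu phit phid tau :: real
  assumes F_prob: "prob_space F" and F_borel: "sets F = sets borel"
    and bounds: "0 \<le> lo" "lo < hi"
    and F_conc: "measure F {lo..hi} = 1"
    and lo_supp: "\<forall>e>0. measure F {lo - e<..<lo + e} > 0"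
    and hi_supp: "\<forall>e>0. measure F {hi - e<..<hi + e} > 0"
    and mu_def: "mu = (LINT x|F. x)"
    and feas: "feasible_RE lo hi mu G phit phid tau"
    and opt: "\<forall>G' phit' phid' tau'. feasible_RE lo hi mu G' phit' phid' tau' \<longrightarrow>
                 objective_RE G' phit' phid' tau' \<le> objective_RE G phit phid tau"
  shows "\<forall>s \<in> {mu + phid..<hi}. cdf G s = cdf G (mu + phid)"
proof (cases "mu + phid < hi")
  case False
  then show ?thesis by simp
next
  case ahi: True
  have d0: "phid \<ge> 0" by (rule feas_d[OF feas])
  show ?thesis
  proof (cases "lo < mu")
    case True
    have mh: "mu < hi" using ahi d0 by simp
    interpret star lo mu hi by unfold_locales (use True mh in auto)
    have "objective_RE Gs 0 k ts \<le> objective_RE G phit phid tau"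
      using opt feas_Gs by blast
    moreover have "objective_RE G phit phid tau < objective_RE Gs 0 k ts"
      unfolding obj_Gs by (rule upper_bound[OF feas ahi True])
    ultimately show ?thesis by simp
  next
    case False
    have dist: "dist_on G lo hi" and mean: "(LINT s|G. s) = mu"
      using feas unfolding feasible_RE_def by auto
    have ps: "prob_space G" and sbG: "sets G = sets borel" and cc: "measure G {lo..hi} = 1"
      using dist unfolding dist_on_def by blast+
    interpret dG G lo hi by (rule dG.intro[OF ps dG_axioms.intro[OF sbG cc]])
    have m: "(\<integral>s. s \<partial>G) \<le> lo" using mean False by simp
    have lom: "lo \<le> mu" using S_lo[of hi] S_hi[of hi] Gx_hi[of hi] mean by simp
    have one: "cdf G x = 1" if "lo \<le> x" for x
      using mean_lo[OF m that] unfolding cdf_def Gx_def .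
    show ?thesis
    proof
      fix s assume s: "s \<in> {mu + phid..<hi}"
      have "lo \<le> mu + phid" using lom d0 by simp
      then show "cdf G s = cdf G (mu + phid)" using one s by simp
    qed
  qed
qed


end
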